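(* Let $q>1$ be an integer and $f$ as in the context, and for $\delta\in(0,1]$ let $f_\delta(u)=\frac{f(u)}{1+\sqrt{\delta}|u|^{2q-2}}$. Then there exist constants $\tilde L_f$ and $\tilde l_f$ independent of $\delta$ such that \[ \sup_{u\in\mathbb{R}}f_\delta'(u)\le\tilde L_f,\qquad |f_\delta'(u)|\le\tilde l_f\big(1+(|u|^{2q-2}\wedge\delta^{-1/2})\big)\quad\text{for all }u\in\mathbb{R}. \]
   Context: $f(v)=-c_fv^{2q-1}+f_0(v)$, $v\in\mathbb{R}$, with $c_f>0$ and $f_0:\mathbb{R}\to\mathbb{R}$ twice differentiable satisfying $|f_0(v)|\le c_{f,0}(1+|v|^{2q-2})$ and $|f_0'(v)|+|f_0''(v)|\le c_{f,1}(1+|v|^{2q-3})$ for all $v$, with constants $c_{f,0},c_{f,1}>0$. *)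

theory Defs
  imports "HOL-Analysis.Analysis"
begin

definition fnl :: "nat \<Rightarrow> real \<Rightarrow> (real \<Rightarrow> real) \<Rightarrow> real \<Rightarrow> real" where
  "fnl q c_f f0 v = - c_f * v ^ (2*q - 1) + f0 v"

definition fdelta :: "nat \<Rightarrow> real \<Rightarrow> (real \<Rightarrow> real) \<Rightarrow> real \<Rightarrow> real \<Rightarrow> real" where
  "fdelta q c_f f0 \<delta> u = fnl q c_f f0 u / (1 + sqrt \<delta> * \<bar>u\<bar> ^ (2*q - 2))"

end

theory Submission
  imports Defs
begin

lemma tri3: "\<bar>x + y - z\<bar> \<le> \<bar>x\<bar> + \<bar>y\<bar> + \<bar>z::real\<bar>"
  by arith

lemma core:
  fixes c c0 c1 s u F0 F1 :: real and n :: nat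
  assumes c: "c > 0" and c0: "c0 > 0" and c1: "c1 > 0" and s: "s > 0" "s \<le> 1"
    and n: "n \<ge> 1" "even n"
    and bF0: "\<bar>F0\<bar> \<le> c0 * (1 + \<bar>u\<bar>^n)" and bF1: "\<bar>F1\<bar> \<le> c1 * (1 + \<bar>u\<bar>^(n-1))"
  defines "P \<equiv> u^n" and "R \<equiv> \<bar>u\<bar>^(n-1)" and "g \<equiv> 1 + s*u^n"
    and "C \<equiv> c1 + real n * c0"
  shows "((-c*(real(n+1)*u^n)+F1)*g - (-c*u^(n+1)+F0)*(s*(real n*u^(n-1))))/(g*g)
            \<le> c1 + C*(C/c)^(n-1)"
    and "\<bar>((-c*(real(n+1)*u^n)+F1)*g - (-c*u^(n+1)+F0)*(s*(real n*u^(n-1))))/(g*g)\<bar>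
            \<le> (c*(n+2) + 2*c1 + n*c0) * (1 + min P (1/s))"
proof -
  define E where "E = u^(n-1)"
  have P0: "P \<ge> 0" unfolding P_def using n by (simp add: zero_le_even_power)
  have Pabs: "P = \<bar>u\<bar>^n" unfolding P_def using n by (simp add: power_even_abs)
  have R0: "R \<ge> 0" unfolding R_def by simp
  have ER: "\<bar>E\<bar> = R" unfolding E_def R_def by (simp add: power_abs)
  have PR: "P = \<bar>u\<bar> * R" unfolding Pabs R_def using n
    by (cases n) auto
  have gP: "g = 1 + s*P" unfolding g_def P_def ..
  have g1: "g \<ge> 1" using gP s P0 by simp
  have gpos: "g > 0" using g1 by simp
  have sPg: "s*P \<le> g" using gP by simp
  have un: "u^(n+1) * E = P^2"
  proof (cases n)
    case (Suc m)
    then show ?thesis by (simp add: E_def P_def power_add[symmetric] power2_eq_square mult_2[symmetric])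
  qed (use n in auto)
  define A where "A = -c*(real n+1)*P - c* s*P^2"
  have Deq: "((-c*(real(n+1)*u^n)+F1)*g - (-c*u^(n+1)+F0)*(s*(real n*u^(n-1))))/(g*g)
      = A/(g*g) + F1/g - s*n*E*F0/(g*g)"
  proof -
    have "(-c*(real(n+1)*u^n)+F1)*g - (-c*u^(n+1)+F0)*(s*(real n*u^(n-1)))
        = A + F1*g - s*n*E*F0"
    proof -
      have "(-c*(real (n+1)*P)+F1)*(1+s*P) - (-c*u^(n+1)+F0)*(s*(real n*E)) - (A + F1*(1+s*P) - s*n*E*F0)
         = c * s*n*(u^(n+1)*E - P^2)"
        unfolding A_def by (simp add: algebra_simps power2_eq_square)
      then have "(-c*(real (n+1)*P)+F1)*(1+s*P) - (-c*u^(n+1)+F0)*(s*(real n*E)) = A + F1*(1+s*P) - s*n*E*F0"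
        using un by simp
      then show ?thesis unfolding gP P_def E_def .
    qed
    then have "((-c*(real(n+1)*u^n)+F1)*g - (-c*u^(n+1)+F0)*(s*(real n*u^(n-1))))/(g*g)
       = (A + F1*g - s*n*E*F0)/(g*g)" by simp
    also have "\<dots> = A/(g*g) + F1*g/(g*g) - s*n*E*F0/(g*g)"
      by (simp add: add_divide_distrib diff_divide_distrib)
    also have "F1*g/(g*g) = F1/g" using gpos by simp
    finally show ?thesis .
  qed
  have RP: "R \<le> 1 + P"
  proof (cases "\<bar>u\<bar> \<le> 1")
    case True then have "R \<le> 1" unfolding R_def by (simp add: power_le_one)
    then show ?thesis using P0 by simp
  next
    case False then have "R \<le> P" unfolding PR using R0
      by (simp add: mult_le_cancel_right1)
    then show ?thesis by simp
  qed
  have h2: "\<bar>s*n*E*F0\<bar> \<le> n*c0*R*g"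
  proof -
    have "\<bar>s*n*E*F0\<bar> = (s*n*R) * \<bar>F0\<bar>" using s ER by (simp add: abs_mult)
    also have "\<dots> \<le> (s*n*R) * (c0*(1+P))" using bF0 Pabs s R0
      by (intro mult_left_mono) auto
    also have "\<dots> = n*c0*R*(s*(1+P))" by (simp add: algebra_simps)
    also have "\<dots> \<le> n*c0*R*g" using s gP P0 c0 R0
      by (intro mult_left_mono) (auto simp: algebra_simps)
    finally show ?thesis .
  qed
  have h2': "\<bar>s*n*E*F0/(g*g)\<bar> \<le> n*c0*R/g"
  proof -
    have "\<bar>s*n*E*F0/(g*g)\<bar> = \<bar>s*n*E*F0\<bar>/(g*g)" using gpos by simp
    also have "\<dots> \<le> n*c0*R*g/(g*g)" by (rule divide_right_mono[OF h2]) (use gpos in simp)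
    also have "\<dots> = n*c0*R/g" using gpos by simp
    finally show ?thesis .
  qed
  have hF1: "\<bar>F1\<bar> \<le> c1*(1+R)" using bF1 unfolding R_def .
  show "((-c*(real(n+1)*u^n)+F1)*g - (-c*u^(n+1)+F0)*(s*(real n*u^(n-1))))/(g*g)
            \<le> c1 + C*(C/c)^(n-1)"
  proof -
    have h1: "A \<le> -c*P*g" unfolding A_def gP using c P0
      by (simp add: algebra_simps power2_eq_square)
    have h1': "A/(g*g) \<le> -c*P/g"
    proof -
      have "A/(g*g) \<le> (-c*P*g)/(g*g)" by (rule divide_right_mono[OF h1]) (use gpos in simp)
      also have "(-c*P*g)/(g*g) = -c*P/g" using gpos by simp
      finally show ?thesis .
    qed
    have key: "-c*P + C*R \<le> C*(C/c)^(n-1)"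
    proof (cases "\<bar>u\<bar> \<le> C/c")
      case True
      have "R \<le> (C/c)^(n-1)" unfolding R_def using True by (intro power_mono) auto
      then have "C*R \<le> C*(C/c)^(n-1)" using c0 c1 unfolding C_def
        by (intro mult_left_mono) auto
      moreover have "c*P \<ge> 0" using c P0 by simp
      ultimately show ?thesis by linarith
    next
      case False
      then have "C \<le> c*\<bar>u\<bar>" using c by (simp add: field_simps)
      then have "C*R \<le> c*\<bar>u\<bar>*R" using R0 by (intro mult_right_mono) auto
      then have "C*R \<le> c*P" unfolding PR by (simp add: algebra_simps)
      moreover have "C*(C/c)^(n-1) \<ge> 0" using c c0 c1 unfolding C_def by simp
      ultimately show ?thesis by linarith
    qed
    define X where "X = -c*P + c1 + C*R"
    have "A/(g*g) + F1/g - s*n*E*F0/(g*g) \<le> -c*P/g + c1*(1+R)/g + n*c0*R/g"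
    proof -
      have "F1/g \<le> c1*(1+R)/g" using hF1 gpos by (intro divide_right_mono) auto
      moreover have "- (s*n*E*F0/(g*g)) \<le> n*c0*R/g" using h2' by linarith
      ultimately show ?thesis using h1' by linarith
    qed
    also have "\<dots> = X/g" unfolding X_def C_def using gpos by (simp add: field_simps)
    also have "\<dots> \<le> c1 + C*(C/c)^(n-1)"
    proof (cases "X \<le> 0")
      case True
      then have "X/g \<le> 0" using gpos by (simp add: divide_nonpos_pos)
      moreover have "C*(C/c)^(n-1) \<ge> 0" using c c0 c1 unfolding C_def by simp
      ultimately show ?thesis using c1 by linarith
    next
      case False
      then have "X/g \<le> X" using g1 by (simp add: divide_le_eq mult_le_cancel_left1)
      then show ?thesis using key unfolding X_def by linarith
    qed
    finally show ?thesis using Deq by simp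
  qed
  show "\<bar>((-c*(real(n+1)*u^n)+F1)*g - (-c*u^(n+1)+F0)*(s*(real n*u^(n-1))))/(g*g)\<bar>
            \<le> (c*(n+2) + 2*c1 + n*c0) * (1 + min P (1/s))"
  proof -
    define Q where "Q = P/g"
    have Q0: "Q \<ge> 0" unfolding Q_def using P0 gpos by simp
    have QM: "Q \<le> min P (1/s)"
    proof -
      have "Q \<le> P" unfolding Q_def using P0 g1 by (simp add: divide_le_eq mult_le_cancel_left1)
      moreover have "Q \<le> 1/s" unfolding Q_def using sPg gpos s
        by (simp add: field_simps)
      ultimately show ?thesis by simp
    qed
    have sQ: "s*P/g \<le> 1" using sPg gpos by simp
    have a1: "\<bar>A/(g*g)\<bar> \<le> c*(n+2)*Q"
    proof -
      have nn: "0 \<le> c*(real n+1)*P + c * s*P^2" using c s P0 by simp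
      have "A = -(c*(real n+1)*P + c * s*P^2)" unfolding A_def by simp
      then have "\<bar>A\<bar> = c*(real n+1)*P + c * s*P^2" using nn by simp
      then have "\<bar>A/(g*g)\<bar> = c*(real n+1)*(Q/g) + c*(s*P/g)*Q"
        using gpos unfolding Q_def by (simp add: field_simps power2_eq_square)
      also have "\<dots> \<le> c*(real n+1)*Q + c*1*Q"
      proof -
        have "Q/g \<le> Q" using Q0 g1 by (simp add: divide_le_eq mult_le_cancel_left1)
        then have "c*(real n+1)*(Q/g) \<le> c*(real n+1)*Q" using c by (intro mult_left_mono) auto
        moreover have "c*(s*P/g)*Q \<le> c*1*Q" using sQ c Q0
          by (intro mult_right_mono mult_left_mono) auto
        ultimately show ?thesis by linarith
      qed
      also have "\<dots> = c*(n+2)*Q" by (simp add: algebra_simps)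
      finally show ?thesis .
    qed
    have a2: "\<bar>F1/g\<bar> \<le> 2*c1 + c1*Q"
    proof -
      have "\<bar>F1/g\<bar> = \<bar>F1\<bar>/g" using gpos by simp
      also have "\<dots> \<le> c1*(2+P)/g" using hF1 RP gpos c1
        by (intro divide_right_mono) (auto intro: order_trans)
      also have "\<dots> = 2*c1/g + c1*Q" unfolding Q_def by (simp add: algebra_simps add_divide_distrib)
      also have "\<dots> \<le> 2*c1 + c1*Q" using g1 c1 by (simp add: divide_le_eq mult_le_cancel_left1)
      finally show ?thesis .
    qed
    have a3: "\<bar>s*n*E*F0/(g*g)\<bar> \<le> n*c0 + n*c0*Q"
    proof -
      have "n*c0*R/g \<le> n*c0*(1+P)/g" using RP c0 gpos
        by (intro divide_right_mono mult_left_mono) auto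
      also have "\<dots> = n*c0/g + n*c0*Q" unfolding Q_def by (simp add: algebra_simps add_divide_distrib)
      also have "\<dots> \<le> n*c0 + n*c0*Q"
      proof -
        have "0 \<le> real n * c0" using c0 by simp
        then have "n*c0/g \<le> n*c0/1" using g1 by (intro divide_left_mono) auto
        then show ?thesis by simp
      qed
      finally show ?thesis using h2' by linarith
    qed
    have "\<bar>A/(g*g) + F1/g - s*n*E*F0/(g*g)\<bar> \<le> (c*(n+2) + c1 + n*c0)*Q + (2*c1 + n*c0)"
    proof -
      have tri: "\<bar>A/(g*g) + F1/g - s*n*E*F0/(g*g)\<bar> \<le> \<bar>A/(g*g)\<bar> + \<bar>F1/g\<bar> + \<bar>s*n*E*F0/(g*g)\<bar>"
        by (rule tri3)
      have eq: "(c*(n+2) + c1 + n*c0)*Q + (2*c1 + n*c0) = c*(n+2)*Q + (2*c1 + c1*Q) + (n*c0 + n*c0*Q)"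
        by (simp add: algebra_simps)
      have "\<bar>A/(g*g) + F1/g - s*n*E*F0/(g*g)\<bar> \<le> c*(n+2)*Q + (2*c1 + c1*Q) + (n*c0 + n*c0*Q)"
        using tri add_mono[OF add_mono[OF a1 a2] a3] by (rule order_trans)
      then show ?thesis unfolding eq .
    qed
    also have "\<dots> \<le> (c*(n+2) + 2*c1 + n*c0)*Q + (c*(n+2) + 2*c1 + n*c0)*1"
      using Q0 c c1 c0 by (intro add_mono mult_right_mono) auto
    also have "\<dots> \<le> (c*(n+2) + 2*c1 + n*c0) * (1 + min P (1/s))"
    proof -
      have L0: "0 \<le> c*(n+2) + 2*c1 + n*c0" using c c0 c1 by simp
      have "(c*(n+2) + 2*c1 + n*c0)*Q \<le> (c*(n+2) + 2*c1 + n*c0)*min P (1/s)"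
        using QM L0 by (rule mult_left_mono)
      then show ?thesis by (simp add: distrib_left)
    qed
    finally show ?thesis using Deq by simp
  qed
qed

lemma deriv_form:
  fixes c s :: real and n :: nat and f0 f0' :: "real \<Rightarrow> real"
  assumes d1: "\<And>v. (f0 has_real_derivative f0' v) (at v)"
  and that: "1 + s*u^n \<noteq> 0"
  shows "((\<lambda>u. (-c*u^(n+1) + f0 u)/(1+s*u^n)) has_real_derivative
     ((-c*(real (n+1)*u^n) + f0' u)*(1+s*u^n) - (-c*u^(n+1) + f0 u)*(s*(real n*u^(n-1))))/((1+s*u^n)*(1+s*u^n))) (at u)"
  apply (rule derivative_eq_intros refl d1 | simp add: that)+
  done

theorem lemma5p1:
  fixes q :: nat and c_f c_f0 c_f1 :: real and f0 f0' f0'' :: "real \<Rightarrow> real"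
  assumes q: "q > 1"
    and cf: "c_f > 0" and cf0: "c_f0 > 0" and cf1: "c_f1 > 0"
    and d1: "\<And>v. (f0 has_real_derivative f0' v) (at v)"
    and d2: "\<And>v. (f0' has_real_derivative f0'' v) (at v)"
    and b0: "\<And>v. \<bar>f0 v\<bar> \<le> c_f0 * (1 + \<bar>v\<bar> ^ (2*q - 2))"
    and b1: "\<And>v. \<bar>f0' v\<bar> + \<bar>f0'' v\<bar> \<le> c_f1 * (1 + \<bar>v\<bar> ^ (2*q - 3))"
  shows "\<exists>L l. \<forall>\<delta>. 0 < \<delta> \<and> \<delta> \<le> 1 \<longrightarrow>
           (\<forall>u. deriv (fdelta q c_f f0 \<delta>) u \<le> L) \<and>
           (\<forall>u. \<bar>deriv (fdelta q c_f f0 \<delta>) u\<bar> \<le> l * (1 + min (\<bar>u\<bar> ^ (2*q - 2)) (1 / sqrt \<delta>)))"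
proof -
  define n where "n = 2*q - 2"
  have n1: "n \<ge> 1" and ev: "even n" using q unfolding n_def by auto
  have e1: "2*q - 1 = n + 1" and e3: "2*q - 3 = n - 1" using q unfolding n_def by auto
  define C where "C = c_f1 + real n * c_f0"
  define L where "L = c_f1 + C*(C/c_f)^(n-1)"
  define l where "l = c_f*(n+2) + 2*c_f1 + n*c_f0"
  have "\<forall>\<delta>. 0 < \<delta> \<and> \<delta> \<le> 1 \<longrightarrow>
           (\<forall>u. deriv (fdelta q c_f f0 \<delta>) u \<le> L) \<and>
           (\<forall>u. \<bar>deriv (fdelta q c_f f0 \<delta>) u\<bar> \<le> l * (1 + min (\<bar>u\<bar> ^ (2*q - 2)) (1 / sqrt \<delta>)))"
  proof (intro allI impI)
    fix \<delta> :: real assume \<delta>: "0 < \<delta> \<and> \<delta> \<le> 1"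
    define s where "s = sqrt \<delta>"
    have s: "s > 0" "s \<le> 1" unfolding s_def using \<delta> by auto
    have feq: "fdelta q c_f f0 \<delta> = (\<lambda>u. (-c_f*u^(n+1) + f0 u)/(1+s*u^n))"
      unfolding fdelta_def fnl_def e1 s_def n_def[symmetric] using ev
      by (simp add: power_even_abs)
    have dv: "deriv (fdelta q c_f f0 \<delta>) u =
      ((-c_f*(real (n+1)*u^n) + f0' u)*(1+s*u^n) - (-c_f*u^(n+1) + f0 u)*(s*(real n*u^(n-1))))/((1+s*u^n)*(1+s*u^n))"
      for u
    proof -
      have "1 + s*u^n > 0" using s ev by (simp add: zero_le_even_power add_pos_nonneg)
      then show ?thesis unfolding feq by (intro DERIV_imp_deriv deriv_form d1) auto
    qed
    have bF0: "\<bar>f0 u\<bar> \<le> c_f0 * (1 + \<bar>u\<bar>^n)" for u using b0[of u] unfolding n_def .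
    have bF1: "\<bar>f0' u\<bar> \<le> c_f1 * (1 + \<bar>u\<bar>^(n-1))" for u using b1[of u] unfolding e3 by linarith
    show "(\<forall>u. deriv (fdelta q c_f f0 \<delta>) u \<le> L) \<and>
           (\<forall>u. \<bar>deriv (fdelta q c_f f0 \<delta>) u\<bar> \<le> l * (1 + min (\<bar>u\<bar> ^ (2*q - 2)) (1 / sqrt \<delta>)))"
    proof (intro conjI allI)
      fix u
      show "deriv (fdelta q c_f f0 \<delta>) u \<le> L"
        unfolding dv L_def C_def
        by (rule core(1)[OF cf cf0 cf1 s n1 ev bF0 bF1])
      have "\<bar>deriv (fdelta q c_f f0 \<delta>) u\<bar> \<le> l * (1 + min (u^n) (1/s))"
        unfolding dv l_def
        by (rule core(2)[OF cf cf0 cf1 s n1 ev bF0 bF1])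
      then show "\<bar>deriv (fdelta q c_f f0 \<delta>) u\<bar> \<le> l * (1 + min (\<bar>u\<bar> ^ (2*q - 2)) (1 / sqrt \<delta>))"
        unfolding n_def[symmetric] s_def using ev by (simp add: power_even_abs)
    qed
  qed
  then show ?thesis by blast
qed

end
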